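(* Suppose each vertex $v_i$ of $P$ initially knows the value of $X[i,\ge j]$ for all $j>i$. Then there exists an $O(\zeta)$-round deterministic $\mathsf{CONGEST}$ algorithm that lets each vertex $v_i$ of $P$ compute $X[\le i,\ge i+1]$.
   Context: $G=(V,E)$ is an unweighted directed graph with $n=|V|$, also the communication network. $\mathsf{CONGEST}$: synchronous rounds, each vertex may send an $O(\log n)$-bit message to each neighbour per round, unique identifiers, unlimited local computation. $P=(s=v_0,\dots,v_{h_{st}}=t)$ is a given shortest $s$-$t$ path whose vertices know their indices, and $\zeta\ge1$ is a threshold. For $i<j$, $X[i,j]$ is the shortest length of an $s$-$t$ path consisting of the subpath of $P$ from $s$ to $v_i$, then a detour path from $v_i$ to $v_j$ with at most $\zeta$ edges sharing no edge with $P$, then the subpath of $P$ from $v_j$ to $t$ ($\infty$ if none exists). Further $X[i,\ge j]=\min_{j'\ge j}X[i,j']$ and $X[\le i,\ge j]=\min_{i'\le i}\min_{j'\ge j}X[i',j']$ (minimum over an empty set is $\infty$). *)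

theory Defs
  imports Main "HOL-Library.Extended_Nat"
begin

text \<open>Vertices are identified with their (unique) identifiers, natural numbers.\<close>

definition walk :: "(nat \<times> nat) set \<Rightarrow> nat list \<Rightarrow> bool" where
  "walk E d \<longleftrightarrow> d \<noteq> [] \<and> (\<forall>k. Suc k < length d \<longrightarrow> (d ! k, d ! Suc k) \<in> E)"

definition wedges :: "nat list \<Rightarrow> (nat \<times> nat) set" where
  "wedges d = {(d ! k, d ! Suc k) | k. Suc k < length d}"

definition congest_graph :: "nat set \<Rightarrow> (nat \<times> nat) set \<Rightarrow> nat \<Rightarrow> bool" where
  "congest_graph V E idexp \<longleftrightarrow> finite V \<and> E \<subseteq> V \<times> V \<and> V \<subseteq> {..< (card V + 1) ^ idexp}"

text \<open>P = ps = [v_0,...,v_h] is a shortest s-t path (s = v_0, t = v_h, h = length ps - 1).\<close>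
definition shortest_path :: "nat set \<Rightarrow> (nat \<times> nat) set \<Rightarrow> nat list \<Rightarrow> bool" where
  "shortest_path V E ps \<longleftrightarrow> walk E ps \<and> set ps \<subseteq> V \<and>
     (\<forall>d. walk E d \<and> hd d = hd ps \<and> last d = last ps \<longrightarrow> length ps \<le> length d)"

text \<open>X[i,j]: shortest length of s-v_i along P, then a detour walk v_i -> v_j with at most
  zeta edges sharing no edge with P, then v_j-t along P (infinity if none).\<close>
definition Xij :: "(nat \<times> nat) set \<Rightarrow> nat list \<Rightarrow> nat \<Rightarrow> nat \<Rightarrow> nat \<Rightarrow> enat" where
  "Xij E ps \<zeta> i j = (INF d \<in> {d. walk E d \<and> hd d = ps ! i \<and> last d = ps ! j \<and>
        length d - 1 \<le> \<zeta> \<and> wedges d \<inter> wedges ps = {}}.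
        enat (i + (length d - 1) + (length ps - 1 - j)))"

definition Xge :: "(nat \<times> nat) set \<Rightarrow> nat list \<Rightarrow> nat \<Rightarrow> nat \<Rightarrow> nat \<Rightarrow> enat" where
  "Xge E ps \<zeta> i j = (INF j' \<in> {j'. j \<le> j' \<and> j' < length ps}. Xij E ps \<zeta> i j')"

definition Xlege :: "(nat \<times> nat) set \<Rightarrow> nat list \<Rightarrow> nat \<Rightarrow> nat \<Rightarrow> nat \<Rightarrow> enat" where
  "Xlege E ps \<zeta> i j = (INF p \<in> {(i', j'). i' \<le> i \<and> j \<le> j' \<and> j' < length ps \<and> i' < j'}.
       Xij E ps \<zeta> (fst p) (snd p))"

text \<open>Local knowledge of a vertex at the start: its identifier, n, zeta, its out- and
  in-neighbours, its index on P (if on P) and the values X[i, >= j] for j > i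
  (given as a function of j; value infinity for j <= i, carrying no information).\<close>
record local_input =
  lid :: nat
  lnum :: nat
  lzeta :: nat
  lout :: "nat set"
  lin :: "nat set"
  lidx :: "nat option"
  lX :: "nat \<Rightarrow> enat"

definition nbrs :: "(nat \<times> nat) set \<Rightarrow> nat \<Rightarrow> nat set" where
  "nbrs E v = {u. (v, u) \<in> E \<or> (u, v) \<in> E}"

definition path_input :: "nat set \<Rightarrow> (nat \<times> nat) set \<Rightarrow> nat list \<Rightarrow> nat \<Rightarrow> nat \<Rightarrow> local_input" where
  "path_input V E ps \<zeta> v =
     (let idx = (if v \<in> set ps then Some (THE i. i < length ps \<and> ps ! i = v) else None) in
      \<lparr> lid = v, lnum = card V, lzeta = \<zeta>, lout = {u. (v, u) \<in> E}, lin = {u. (u, v) \<in> E},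
        lidx = idx,
        lX = (\<lambda>j. case idx of Some i \<Rightarrow> (if i < j then Xge E ps \<zeta> i j else \<infinity>) | None \<Rightarrow> \<infinity>) \<rparr>)"

text \<open>A deterministic algorithm is given in full-information form: the message a vertex sends
  to neighbour u in a round is a function of its local input and the history of all messages
  it received so far (an inbox maps a sender identifier to the message received from it, if
  any); its output is likewise a function of input and history.  Messages are natural numbers
  (bounded below by a polynomial in n, i.e. O(log n) bits, in the theorem).\<close>

type_synonym inbox = "nat \<Rightarrow> nat option"
type_synonym send_fun = "local_input \<Rightarrow> inbox list \<Rightarrow> nat \<Rightarrow> nat option"

fun hist :: "send_fun \<Rightarrow> (nat \<times> nat) set \<Rightarrow> (nat \<Rightarrow> local_input) \<Rightarrow> nat \<Rightarrow> nat \<Rightarrow> inbox list" where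
  "hist sf E inp 0 v = []"
| "hist sf E inp (Suc r) v =
     hist sf E inp r v @ [(\<lambda>u. if u \<in> nbrs E v then sf (inp u) (hist sf E inp r u) v else None)]"

end

theory Submission
  imports Defs
begin


lemma walk_single[simp]: "walk E [x]"
  by (simp add: walk_def)

lemma walk_Cons2[simp]: "walk E (x # y # zs) \<longleftrightarrow> (x, y) \<in> E \<and> walk E (y # zs)"
proof
  assume "walk E (x # y # zs)"
  then show "(x, y) \<in> E \<and> walk E (y # zs)"
    unfolding walk_def by (metis Suc_less_eq length_Cons list.distinct(1) nth_Cons_0 nth_Cons_Suc zero_less_Suc)
next
  assume a: "(x, y) \<in> E \<and> walk E (y # zs)"
  show "walk E (x # y # zs)" unfolding walk_def
  proof (intro conjI allI impI)
    fix k assume "Suc k < length (x # y # zs)"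
    then show "((x # y # zs) ! k, (x # y # zs) ! Suc k) \<in> E"
      using a unfolding walk_def by (cases k) auto
  qed simp
qed

lemma walk_Nil[simp]: "\<not> walk E []" by (simp add: walk_def)

lemma wedges_single[simp]: "wedges [x] = {}"
  by (simp add: wedges_def)

lemma wedges_Nil[simp]: "wedges [] = {}"
  by (simp add: wedges_def)

lemma wedges_Cons2[simp]: "wedges (x # y # zs) = insert (x, y) (wedges (y # zs))"
proof -
  have "wedges (x # y # zs) = {((x # y # zs) ! k, (x # y # zs) ! Suc k) | k. Suc k < length (x # y # zs)}"
    by (simp add: wedges_def)
  also have "\<dots> = insert (x, y) {((y # zs) ! k, (y # zs) ! Suc k) | k. Suc k < length (y # zs)}"
    apply (rule set_eqI) apply (rule iffI)
     apply (clarsimp) apply (case_tac k) apply auto[1] apply force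
    apply clarsimp apply (erule disjE) apply (rule_tac x=0 in exI) apply simp
    apply clarsimp apply (rule_tac x="Suc k" in exI) apply simp done
  finally show ?thesis by (simp add: wedges_def)
qed

lemma walk_append: "walk E (xs @ y # ys) \<longleftrightarrow> walk E (xs @ [y]) \<and> walk E (y # ys)"
proof (induction xs)
  case Nil then show ?case by simp
next
  case (Cons a xs) then show ?case by (cases xs) auto
qed

lemma wedges_append: "wedges (xs @ y # ys) = wedges (xs @ [y]) \<union> wedges (y # ys)"
proof (induction xs)
  case Nil then show ?case by simp
next
  case (Cons a xs) then show ?case by (cases xs) auto
qed

lemma shorten1:
  assumes "walk E d" "\<not> distinct d"
  shows "\<exists>d'. walk E d' \<and> hd d' = hd d \<and> last d' = last d \<and> wedges d' \<subseteq> wedges d \<and> length d' < length d"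
proof -
  obtain a x b c where d: "d = a @ [x] @ b @ [x] @ c" using not_distinct_decomp[OF assms(2)] by blast
  have w1: "walk E (a @ [x])" "walk E (x # c)"
  proof -
    have "walk E (a @ x # (b @ x # c))" using assms(1) unfolding d by simp
    then have w: "walk E (a @ [x])" "walk E (x # b @ x # c)" using walk_append by blast+
    then show "walk E (a @ [x])" by simp
    have "walk E ((x # b) @ x # c)" using w(2) by simp
    then show "walk E (x # c)" using walk_append by blast
  qed
  have "walk E (a @ x # c)" using w1 walk_append by blast
  moreover have "wedges (a @ x # c) \<subseteq> wedges d"
    unfolding d wedges_append[of a x c] using wedges_append[of a x "b @ x # c"]
      wedges_append[of "x # b" x c] by auto
  moreover have "hd (a @ x # c) = hd d" unfolding d by (cases a) auto
  moreover have "last (a @ x # c) = last d" unfolding d by (cases c) auto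
  moreover have "length (a @ x # c) < length d" unfolding d by simp
  ultimately show ?thesis by blast
qed

lemma shorten:
  assumes "walk E d"
  shows "\<exists>d'. walk E d' \<and> hd d' = hd d \<and> last d' = last d \<and> wedges d' \<subseteq> wedges d \<and> length d' \<le> length d \<and> distinct d'"
  using assms
proof (induction "length d" arbitrary: d rule: less_induct)
  case less
  show ?case
  proof (cases "distinct d")
    case True then show ?thesis using less.prems by blast
  next
    case False
    then obtain d1 where d1: "walk E d1" "hd d1 = hd d" "last d1 = last d" "wedges d1 \<subseteq> wedges d" "length d1 < length d"
      using shorten1[OF less.prems] by blast
    from less.hyps[OF d1(5) d1(1)] d1 show ?thesis by (metis order.trans less_imp_le)
  qed
qed

lemma walk_set:
  assumes "walk E d" "E \<subseteq> V \<times> V" "hd d \<in> V"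
  shows "set d \<subseteq> V"
proof
  fix x assume "x \<in> set d"
  then obtain k where k: "k < length d" "d ! k = x" by (auto simp: in_set_conv_nth)
  show "x \<in> V"
  proof (cases k)
    case 0 then show ?thesis using k assms(3) by (simp add: hd_conv_nth)
  next
    case (Suc k') then have "(d ! k', d ! k) \<in> E" using assms(1) k unfolding walk_def by auto
    then show ?thesis using assms(2) k by auto
  qed
qed

lemma sp_distinct:
  assumes "shortest_path V E ps" shows "distinct ps"
proof (rule ccontr)
  assume "\<not> distinct ps"
  then obtain d where "walk E d" "hd d = hd ps" "last d = last ps" "length d < length ps"
    using shorten1 assms unfolding shortest_path_def by blast
  then show False using assms unfolding shortest_path_def by force
qed

lemma sp_detour:
  assumes sp: "shortest_path V E ps" and ij: "i < length ps" "j < length ps"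
    and d: "walk E d" "hd d = ps ! i" "last d = ps ! j"
  shows "j \<le> i + (length d - 1)"
proof -
  have wp: "walk E ps" using sp by (simp add: shortest_path_def)
  have psi: "ps = take i ps @ ps ! i # drop (Suc i) ps" using ij by (simp add: id_take_nth_drop)
  have psj: "ps = take j ps @ ps ! j # drop (Suc j) ps" using ij by (simp add: id_take_nth_drop)
  have w1: "walk E (take i ps @ [ps ! i])" using wp psi walk_append by metis
  have w2: "walk E (ps ! j # drop (Suc j) ps)" using wp psj walk_append by metis
  have dne: "d \<noteq> []" using d(1) by auto
  have dd: "d = ps ! i # tl d" using dne d(2) by (cases d) auto
  have w3: "walk E (take i ps @ d)" using w1 d(1) walk_append dd by metis
  have dd2: "take i ps @ d = (take i ps @ butlast d) @ [ps ! j]"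
    using dne d(3) by (metis append_assoc append_butlast_last_id)
  have w4: "walk E ((take i ps @ butlast d) @ ps ! j # drop (Suc j) ps)"
    using walk_append w3 w2 dd2 by metis
  define w where "w = (take i ps @ butlast d) @ ps ! j # drop (Suc j) ps"
  have "hd w = hd ps"
  proof (cases i)
    case 0
    have "hd w = hd ((take i ps @ butlast d) @ [ps ! j])" unfolding w_def by (cases "take i ps @ butlast d") auto
    also have "\<dots> = hd d" using dd2 0 by simp
    finally show ?thesis using d(2) 0 ij by (simp add: hd_conv_nth)
  next
    case (Suc i') then show ?thesis unfolding w_def using ij
      by (cases ps) auto
  qed
  moreover have "last w = last ps"
  proof (cases "Suc j < length ps")
    case True then show ?thesis unfolding w_def by (simp add: last_drop)
  next
    case False then have j: "j = length ps - 1" using ij by auto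
    have "drop (Suc j) ps = []" using False by simp
    then have "last w = ps ! j" unfolding w_def by simp
    then show ?thesis using j ij by (subst last_conv_nth) auto
  qed
  ultimately have "length ps \<le> length w" using sp w4 unfolding shortest_path_def w_def by blast
  moreover have "length w = i + (length d - 1) + 1 + (length ps - Suc j)"
    unfolding w_def using ij dne by simp
  ultimately show ?thesis using ij by linarith
qed



lemma INF_bounded:
  fixes f :: "'a \<Rightarrow> enat"
  assumes "\<And>x. x \<in> A \<Longrightarrow> f x = \<infinity> \<or> f x \<le> enat K"
  shows "(INF x\<in>A. f x) = \<infinity> \<or> (INF x\<in>A. f x) \<le> enat K"
proof (cases "\<exists>x\<in>A. f x \<noteq> \<infinity>")
  case True
  then obtain x where x: "x \<in> A" "f x \<noteq> \<infinity>" by blast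
  then have "(INF x\<in>A. f x) \<le> f x" by (auto intro: INF_lower)
  moreover have "f x \<le> enat K" using assms[OF x(1)] x(2) by auto
  ultimately show ?thesis by (meson order.trans)
next
  case False
  then have "(INF x\<in>A. f x) = \<infinity>" by (simp add: top_enat_def[symmetric])
  then show ?thesis by simp
qed

lemma min_bounded:
  fixes a b :: enat
  shows "a = \<infinity> \<or> a \<le> enat K \<Longrightarrow> b = \<infinity> \<or> b \<le> enat K \<Longrightarrow> min a b = \<infinity> \<or> min a b \<le> enat K"
  by (auto simp: min_def)

lemma Xij_inf:
  assumes sp: "shortest_path V E ps" and ij: "i < length ps" "j < length ps" "i + \<zeta> < j"
  shows "Xij E ps \<zeta> i j = \<infinity>"
proof -
  have e: "{d. walk E d \<and> hd d = ps ! i \<and> last d = ps ! j \<and>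
        length d - 1 \<le> \<zeta> \<and> wedges d \<inter> wedges ps = {}} = {}"
    using sp_detour[OF sp ij(1,2)] ij(3) by fastforce
  show ?thesis unfolding Xij_def e by (simp add: top_enat_def)
qed

lemma distinct_len_card:
  assumes "distinct d" "set d \<subseteq> V" "finite V"
  shows "length d \<le> card V"
  using assms by (metis card_mono distinct_card)

lemma Xij_bound:
  assumes cg: "congest_graph V E idexp" and sp: "shortest_path V E ps" and i: "i < length ps"
  shows "Xij E ps \<zeta> i j = \<infinity> \<or> Xij E ps \<zeta> i j \<le> enat (3 * card V)"
proof -
  let ?S = "{d. walk E d \<and> hd d = ps ! i \<and> last d = ps ! j \<and>
        length d - 1 \<le> \<zeta> \<and> wedges d \<inter> wedges ps = {}}"
  have fin: "finite V" and EV: "E \<subseteq> V \<times> V" using cg by (auto simp: congest_graph_def)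
  have psV: "set ps \<subseteq> V" using sp by (simp add: shortest_path_def)
  have lps: "length ps \<le> card V" using distinct_len_card[OF sp_distinct[OF sp] psV fin] .
  show ?thesis
  proof (cases "?S = {}")
    case True then show ?thesis unfolding Xij_def True by (simp add: top_enat_def)
  next
    case False
    then obtain d where d: "d \<in> ?S" by blast
    then obtain d' where d': "walk E d'" "hd d' = hd d" "last d' = last d" "wedges d' \<subseteq> wedges d"
      "length d' \<le> length d" "distinct d'"
      using shorten[of E d] by blast
    have "d' \<in> ?S" using d d' by auto
    then have le: "Xij E ps \<zeta> i j \<le> enat (i + (length d' - 1) + (length ps - 1 - j))"
      unfolding Xij_def by (rule INF_lower)
    have "hd d' \<in> V" using d d' psV i by auto
    then have "set d' \<subseteq> V" using walk_set[OF d'(1) EV] by blast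
    then have "length d' \<le> card V" using distinct_len_card[OF d'(6) _ fin] by blast
    then have "i + (length d' - 1) + (length ps - 1 - j) \<le> 3 * card V" using lps i by linarith
    then have "enat (i + (length d' - 1) + (length ps - 1 - j)) \<le> enat (3 * card V)" by simp
    then show ?thesis using le by (blast intro: order.trans)
  qed
qed

lemma Xge_bound:
  assumes cg: "congest_graph V E idexp" and sp: "shortest_path V E ps" and i: "i < length ps"
  shows "Xge E ps \<zeta> i j = \<infinity> \<or> Xge E ps \<zeta> i j \<le> enat (3 * card V)"
  unfolding Xge_def by (rule INF_bounded) (rule Xij_bound[OF cg sp i])

section \<open>The algorithm\<close>

definition BB :: "nat \<Rightarrow> nat" where "BB n = 3 * n + 3"
definition enc :: "enat \<Rightarrow> nat" where "enc x = (case x of enat k \<Rightarrow> Suc k | \<infinity> \<Rightarrow> 0)"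
definition dec :: "nat \<Rightarrow> nat \<Rightarrow> enat" where
  "dec n msg = (if msg mod BB n = 0 then \<infinity> else enat (msg mod BB n - 1))"

definition recv :: "local_input \<Rightarrow> inbox \<Rightarrow> enat" where
  "recv inp I = (case lidx inp of None \<Rightarrow> \<infinity> | Some m \<Rightarrow>
     if m = 0 then \<infinity> else
     if (\<exists>u msg. I u = Some msg \<and> msg div BB (lnum inp) = m - 1)
     then dec (lnum inp) (SOME msg. \<exists>u. I u = Some msg \<and> msg div BB (lnum inp) = m - 1)
     else \<infinity>)"

definition cmpv :: "local_input \<Rightarrow> inbox list \<Rightarrow> nat \<Rightarrow> enat" where
  "cmpv inp H r = (case lidx inp of None \<Rightarrow> \<infinity> | Some m \<Rightarrow>
     min (lX inp (m + (lzeta inp - r))) (if r = 0 then \<infinity> else recv inp (H ! (r - 1))))"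

definition alg_send :: send_fun where
  "alg_send inp H u = (case lidx inp of None \<Rightarrow> None | Some m \<Rightarrow>
     Some (m * BB (lnum inp) + enc (cmpv inp H (length H))))"

definition alg_out :: "local_input \<Rightarrow> inbox list \<Rightarrow> enat" where
  "alg_out inp H = cmpv inp H (lzeta inp - 1)"

lemma hist_length[simp]: "length (hist sf E inp r v) = r"
  by (induction r) auto

lemma hist_nth:
  "r < R \<Longrightarrow> hist sf E inp R v ! r = (\<lambda>u. if u \<in> nbrs E v then sf (inp u) (hist sf E inp r u) v else None)"
proof (induction R)
  case 0 then show ?case by simp
next
  case (Suc R) then show ?case by (cases "r = R") (auto simp: nth_append)
qed

lemma cmpv_hist:
  "r \<le> R \<Longrightarrow> cmpv inp (hist sf E I R v) r = cmpv inp (hist sf E I r v) r"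
proof (cases r)
  case (Suc k)
  assume "r \<le> R"
  have kR: "k < R" using Suc \<open>r \<le> R\<close> by simp
  have kr: "k < r" using Suc by simp
  have "hist sf E I R v ! k = hist sf E I r v ! k" unfolding hist_nth[OF kR] hist_nth[OF kr] ..
  then have h: "hist sf E I R v ! (r - 1) = hist sf E I r v ! (r - 1)" using Suc by simp
  show ?thesis unfolding cmpv_def h ..
qed (simp add: cmpv_def)

lemma the_idx:
  assumes "distinct ps" "m < length ps"
  shows "(THE i. i < length ps \<and> ps ! i = ps ! m) = m"
  using assms by (auto intro!: the_equality simp: nth_eq_iff_index_eq)



lemma pi_ps:
  assumes "distinct ps" "m < length ps"
  shows "lidx (path_input V E ps \<zeta> (ps ! m)) = Some m"
    "lnum (path_input V E ps \<zeta> (ps ! m)) = card V"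
    "lzeta (path_input V E ps \<zeta> (ps ! m)) = \<zeta>"
    "lX (path_input V E ps \<zeta> (ps ! m)) = (\<lambda>j. if m < j then Xge E ps \<zeta> m j else \<infinity>)"
proof -
  have idx: "(if ps ! m \<in> set ps then Some (THE i. i < length ps \<and> ps ! i = ps ! m) else None) = Some m"
    using the_idx[OF assms] nth_mem[OF assms(2)] by simp
  show "lidx (path_input V E ps \<zeta> (ps ! m)) = Some m"
    "lnum (path_input V E ps \<zeta> (ps ! m)) = card V"
    "lzeta (path_input V E ps \<zeta> (ps ! m)) = \<zeta>"
    "lX (path_input V E ps \<zeta> (ps ! m)) = (\<lambda>j. if m < j then Xge E ps \<zeta> m j else \<infinity>)"
    unfolding path_input_def Let_def idx by simp_all
qed

lemma pi_lnum[simp]: "lnum (path_input V E ps \<zeta> v) = card V"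
  by (simp add: path_input_def Let_def)

lemma pi_lidx:
  assumes "distinct ps" "lidx (path_input V E ps \<zeta> v) = Some m"
  shows "m < length ps \<and> v = ps ! m"
proof -
  have v: "v \<in> set ps"
  proof (rule ccontr)
    assume "v \<notin> set ps"
    then have "lidx (path_input V E ps \<zeta> v) = None" by (simp add: path_input_def Let_def)
    then show False using assms(2) by simp
  qed
  then obtain k where k: "k < length ps" "v = ps ! k" by (auto simp: in_set_conv_nth)
  then have "lidx (path_input V E ps \<zeta> v) = Some k" using pi_ps(1)[OF assms(1)] by simp
  then show ?thesis using assms(2) k by simp
qed

lemma enc_dec:
  assumes "x = \<infinity> \<or> x \<le> enat (3 * n + 1)"
  shows "enc x < BB n" "(m * BB n + enc x) div BB n = m" "dec n (m * BB n + enc x) = x"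
proof -
  show e: "enc x < BB n" using assms by (cases x) (auto simp: enc_def BB_def)
  show "(m * BB n + enc x) div BB n = m" using e by simp
  have h: "(m * BB n + enc x) mod BB n = enc x" using e by simp
  show "dec n (m * BB n + enc x) = x"
  proof (cases x)
    case (enat k)
    then have "enc x = Suc k" by (simp add: enc_def)
    then show ?thesis unfolding dec_def h using enat by simp
  next
    case infinity
    then have "enc x = 0" by (simp add: enc_def)
    then show ?thesis unfolding dec_def h using infinity by simp
  qed
qed



lemma dec_bound: "dec n msg = \<infinity> \<or> dec n msg \<le> enat (3 * n + 1)"
proof -
  have "msg mod BB n < BB n" by (simp add: BB_def)
  then have h: "msg mod BB n - 1 \<le> 3 * n + 1" unfolding BB_def by linarith
  show ?thesis unfolding dec_def using h by auto
qed

lemma recv_bound: "recv inp I = \<infinity> \<or> recv inp I \<le> enat (3 * lnum inp + 1)"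
  unfolding recv_def using dec_bound by (auto split: option.splits)

lemma cmpv_bound:
  assumes cg: "congest_graph V E idexp" and sp: "shortest_path V E ps"
  shows "cmpv (path_input V E ps \<zeta> v) H r = \<infinity> \<or> cmpv (path_input V E ps \<zeta> v) H r \<le> enat (3 * card V + 1)"
proof (cases "lidx (path_input V E ps \<zeta> v)")
  case None then show ?thesis by (simp add: cmpv_def)
next
  case (Some m)
  have ds: "distinct ps" using sp_distinct[OF sp] .
  then have mv: "m < length ps" "v = ps ! m" using pi_lidx[OF ds Some] by auto
  let ?inp = "path_input V E ps \<zeta> v"
  have a: "lX ?inp j = \<infinity> \<or> lX ?inp j \<le> enat (3 * card V + 1)" for j
  proof -
    have "Xge E ps \<zeta> m j = \<infinity> \<or> Xge E ps \<zeta> m j \<le> enat (3 * card V)" using Xge_bound[OF cg sp mv(1)] .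
    then have "Xge E ps \<zeta> m j = \<infinity> \<or> Xge E ps \<zeta> m j \<le> enat (3 * card V + 1)"
      by (auto intro: order.trans)
    then show ?thesis using pi_ps(4)[OF ds mv(1)] mv(2) by simp
  qed
  have b: "(if r = 0 then \<infinity> else recv ?inp (H ! (r - 1))) = \<infinity> \<or>
           (if r = 0 then \<infinity> else recv ?inp (H ! (r - 1))) \<le> enat (3 * card V + 1)"
    using recv_bound[of ?inp] by simp
  show ?thesis unfolding cmpv_def Some using min_bounded[OF a b] by simp
qed

lemma send_char:
  assumes "distinct ps" "alg_send (path_input V E ps \<zeta> u) H v = Some msg"
  shows "\<exists>m. m < length ps \<and> u = ps ! m \<and>
     msg = m * BB (card V) + enc (cmpv (path_input V E ps \<zeta> u) H (length H))"
proof (cases "lidx (path_input V E ps \<zeta> u)")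
  case None then show ?thesis using assms(2) by (simp add: alg_send_def)
next
  case (Some m)
  then show ?thesis using assms(2) pi_lidx[OF assms(1) Some] by (auto simp: alg_send_def)
qed

lemma recv_step:
  assumes cg: "congest_graph V E idexp" and sp: "shortest_path V E ps"
    and m: "0 < m" "m < length ps"
  shows "recv (path_input V E ps \<zeta> (ps ! m)) (hist alg_send E (path_input V E ps \<zeta>) (Suc r) (ps ! m) ! r)
       = cmpv (path_input V E ps \<zeta> (ps ! (m - 1))) (hist alg_send E (path_input V E ps \<zeta>) r (ps ! (m - 1))) r"
proof -
  let ?inp = "path_input V E ps \<zeta>"
  let ?H = "hist alg_send E ?inp"
  let ?B = "BB (card V)"
  define I where "I = ?H (Suc r) (ps ! m) ! r"
  have I: "I = (\<lambda>u. if u \<in> nbrs E (ps ! m) then alg_send (?inp u) (?H r u) (ps ! m) else None)"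
    unfolding I_def by (rule hist_nth) simp
  have ds: "distinct ps" using sp_distinct[OF sp] .
  define c where "c = cmpv (?inp (ps ! (m - 1))) (?H r (ps ! (m - 1))) r"
  have cb: "c = \<infinity> \<or> c \<le> enat (3 * card V + 1)" unfolding c_def by (rule cmpv_bound[OF cg sp])
  define msg0 where "msg0 = (m - 1) * ?B + enc c"
  have m1: "m - 1 < length ps" using m by simp
  have wp: "walk E ps" using sp by (simp add: shortest_path_def)
  have sm: "Suc (m - 1) < length ps" using m by simp
  have "(ps ! (m - 1), ps ! Suc (m - 1)) \<in> E" using wp sm unfolding walk_def by blast
  then have nb: "ps ! (m - 1) \<in> nbrs E (ps ! m)" using m by (simp add: nbrs_def)
  have I0: "I (ps ! (m - 1)) = Some msg0"
    unfolding I msg0_def c_def using nb pi_ps(1)[OF ds m1] by (simp add: alg_send_def)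
  have d0: "msg0 div ?B = m - 1" unfolding msg0_def using enc_dec(2)[OF cb] .
  have uniq: "msg = msg0" if "I u = Some msg" "msg div ?B = m - 1" for u msg
  proof -
    have "u \<in> nbrs E (ps ! m)" "alg_send (?inp u) (?H r u) (ps ! m) = Some msg"
      using that(1) unfolding I by (auto split: if_splits)
    then obtain m' where m': "m' < length ps" "u = ps ! m'"
      "msg = m' * ?B + enc (cmpv (?inp u) (?H r u) r)"
      using send_char[OF ds] by fastforce
    have "msg div ?B = m'" unfolding m'(3) using enc_dec(2)[OF cmpv_bound[OF cg sp]] .
    then have "m' = m - 1" using that(2) by simp
    then show ?thesis using m' unfolding msg0_def c_def by simp
  qed
  have ex: "\<exists>u msg. I u = Some msg \<and> msg div ?B = m - 1" using I0 d0 by blast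
  have some: "(SOME msg. \<exists>u. I u = Some msg \<and> msg div ?B = m - 1) = msg0"
  proof (rule some_equality)
    show "\<exists>u. I u = Some msg0 \<and> msg0 div ?B = m - 1" using I0 d0 by blast
  next
    fix msg assume "\<exists>u. I u = Some msg \<and> msg div ?B = m - 1"
    then show "msg = msg0" using uniq by blast
  qed
  have "recv (?inp (ps ! m)) I = dec (card V) msg0"
    unfolding recv_def using pi_ps[OF ds m(2)] m ex some by simp
  also have "\<dots> = c" unfolding msg0_def using enc_dec(3)[OF cb] .
  finally show ?thesis unfolding I_def c_def .
qed



lemma invariant:
  assumes cg: "congest_graph V E idexp" and sp: "shortest_path V E ps"
  shows "r < \<zeta> \<Longrightarrow> m < length ps \<Longrightarrow>
    cmpv (path_input V E ps \<zeta> (ps ! m)) (hist alg_send E (path_input V E ps \<zeta>) r (ps ! m)) r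
      = (INF i' \<in> {m - r..m}. Xge E ps \<zeta> i' (m + (\<zeta> - r)))"
proof (induction r arbitrary: m)
  case 0
  have ds: "distinct ps" using sp_distinct[OF sp] .
  show ?case using 0 pi_ps[OF ds 0(2)] by (simp add: cmpv_def)
next
  case (Suc r)
  have ds: "distinct ps" using sp_distinct[OF sp] .
  let ?H = "hist alg_send E (path_input V E ps \<zeta>)"
  have lx: "lX (path_input V E ps \<zeta> (ps ! m)) (m + (\<zeta> - Suc r)) = Xge E ps \<zeta> m (m + (\<zeta> - Suc r))"
  proof -
    have lt: "m < m + (\<zeta> - Suc r)" using Suc(2) by simp
    show ?thesis by (simp only: pi_ps(4)[OF ds Suc(3)] if_P[OF lt])
  qed
  have c: "cmpv (path_input V E ps \<zeta> (ps ! m)) (?H (Suc r) (ps ! m)) (Suc r)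
     = min (Xge E ps \<zeta> m (m + (\<zeta> - Suc r))) (recv (path_input V E ps \<zeta> (ps ! m)) (?H (Suc r) (ps ! m) ! r))"
    unfolding cmpv_def using pi_ps[OF ds Suc(3)] lx by simp
  show ?case
  proof (cases m)
    case 0
    have "recv (path_input V E ps \<zeta> (ps ! m)) (?H (Suc r) (ps ! m) ! r) = \<infinity>"
      unfolding recv_def using pi_ps(1)[OF ds Suc(3)] 0 by simp
    then show ?thesis using c 0 by simp
  next
    case (Suc m')
    have rec: "recv (path_input V E ps \<zeta> (ps ! m)) (?H (Suc r) (ps ! m) ! r)
       = (INF i' \<in> {(m - 1) - r..m - 1}. Xge E ps \<zeta> i' ((m - 1) + (\<zeta> - r)))"
    proof -
      have "recv (path_input V E ps \<zeta> (ps ! m)) (?H (Suc r) (ps ! m) ! r)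
         = cmpv (path_input V E ps \<zeta> (ps ! (m - 1))) (?H r (ps ! (m - 1))) r"
        by (rule recv_step[OF cg sp]) (use Suc \<open>m < length ps\<close> in auto)
      also have "\<dots> = (INF i' \<in> {(m - 1) - r..m - 1}. Xge E ps \<zeta> i' ((m - 1) + (\<zeta> - r)))"
        by (rule Suc.IH) (use Suc \<open>m < length ps\<close> \<open>Suc r < \<zeta>\<close> in auto)
      finally show ?thesis .
    qed
    have e1: "(m - 1) + (\<zeta> - r) = m + (\<zeta> - Suc r)" using Suc \<open>Suc r < \<zeta>\<close> by simp
    have e2: "{m - Suc r..m} = insert m {(m - 1) - r..m - 1}" using Suc by auto
    show ?thesis unfolding c rec e1 e2 by (simp add: inf_min)
  qed
qed

lemma Xlege_eq:
  assumes sp: "shortest_path V E ps" and i: "i < length ps" and z: "1 \<le> \<zeta>"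
  shows "(INF i' \<in> {i - (\<zeta> - 1)..i}. Xge E ps \<zeta> i' (Suc i)) = Xlege E ps \<zeta> i (Suc i)"
proof (rule order.antisym)
  show "(INF i' \<in> {i - (\<zeta> - 1)..i}. Xge E ps \<zeta> i' (Suc i)) \<le> Xlege E ps \<zeta> i (Suc i)"
    unfolding Xlege_def
  proof (rule INF_greatest)
    fix p assume p: "p \<in> {(i', j'). i' \<le> i \<and> Suc i \<le> j' \<and> j' < length ps \<and> i' < j'}"
    obtain i' j' where pij: "p = (i', j')" by (cases p)
    have p': "i' \<le> i" "Suc i \<le> j'" "j' < length ps" "i' < j'" using p pij by auto
    show "(INF i' \<in> {i - (\<zeta> - 1)..i}. Xge E ps \<zeta> i' (Suc i)) \<le> Xij E ps \<zeta> (fst p) (snd p)"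
    proof (cases "i - (\<zeta> - 1) \<le> i'")
      case True
      then have "(INF i' \<in> {i - (\<zeta> - 1)..i}. Xge E ps \<zeta> i' (Suc i)) \<le> Xge E ps \<zeta> i' (Suc i)"
        using p' by (intro INF_lower) auto
      also have "\<dots> \<le> Xij E ps \<zeta> i' j'" unfolding Xge_def using p' by (intro INF_lower) auto
      finally show ?thesis using pij by simp
    next
      case False
      then have "i' + \<zeta> < j'" using p' z by linarith
      then have "Xij E ps \<zeta> i' j' = \<infinity>" using Xij_inf[OF sp _ p'(3)] p' by simp
      then show ?thesis using pij by simp
    qed
  qed
next
  show "Xlege E ps \<zeta> i (Suc i) \<le> (INF i' \<in> {i - (\<zeta> - 1)..i}. Xge E ps \<zeta> i' (Suc i))"
  proof (rule INF_greatest)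
    fix i' assume i': "i' \<in> {i - (\<zeta> - 1)..i}"
    show "Xlege E ps \<zeta> i (Suc i) \<le> Xge E ps \<zeta> i' (Suc i)"
      unfolding Xge_def
    proof (rule INF_greatest)
      fix j' assume j': "j' \<in> {j'. Suc i \<le> j' \<and> j' < length ps}"
      show "Xlege E ps \<zeta> i (Suc i) \<le> Xij E ps \<zeta> i' j'"
        unfolding Xlege_def using i' j'
        by (rule_tac INF_lower2[of "(i', j')"]) auto
    qed
  qed
qed

theorem lemma4p4:
  shows "\<forall>idexp :: nat. \<exists>(sendf :: send_fun) (outf :: local_input \<Rightarrow> inbox list \<Rightarrow> enat)
            (cr :: nat) (cm :: nat).
     \<forall>V E ps (\<zeta> :: nat).
       congest_graph V E idexp \<and> shortest_path V E ps \<and> 1 \<le> \<zeta> \<longrightarrow>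
       (\<forall>r < cr * \<zeta>. \<forall>v \<in> V. \<forall>u \<in> nbrs E v. \<forall>m.
          sendf (path_input V E ps \<zeta> v) (hist sendf E (path_input V E ps \<zeta>) r v) u = Some m
          \<longrightarrow> m < (card V + 1) ^ cm) \<and>
       (\<forall>i < length ps.
          outf (path_input V E ps \<zeta> (ps ! i)) (hist sendf E (path_input V E ps \<zeta>) (cr * \<zeta>) (ps ! i))
          = Xlege E ps \<zeta> i (Suc i))"
proof (intro allI)
  fix idexp :: nat
  show "\<exists>(sendf :: send_fun) (outf :: local_input \<Rightarrow> inbox list \<Rightarrow> enat) (cr :: nat) (cm :: nat).
     \<forall>V E ps (\<zeta> :: nat).
       congest_graph V E idexp \<and> shortest_path V E ps \<and> 1 \<le> \<zeta> \<longrightarrow>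
       (\<forall>r < cr * \<zeta>. \<forall>v \<in> V. \<forall>u \<in> nbrs E v. \<forall>m.
          sendf (path_input V E ps \<zeta> v) (hist sendf E (path_input V E ps \<zeta>) r v) u = Some m
          \<longrightarrow> m < (card V + 1) ^ cm) \<and>
       (\<forall>i < length ps.
          outf (path_input V E ps \<zeta> (ps ! i)) (hist sendf E (path_input V E ps \<zeta>) (cr * \<zeta>) (ps ! i))
          = Xlege E ps \<zeta> i (Suc i))"
  proof (rule exI[where x=alg_send], rule exI[where x=alg_out], rule exI[where x=1], rule exI[where x=3],
      intro allI impI conjI ballI)
    fix V E ps and \<zeta> :: nat
    assume H: "congest_graph V E idexp \<and> shortest_path V E ps \<and> 1 \<le> \<zeta>"
    then have cg: "congest_graph V E idexp" and sp: "shortest_path V E ps" and z: "1 \<le> \<zeta>" by auto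
    have ds: "distinct ps" using sp_distinct[OF sp] .
    have fin: "finite V" using cg by (simp add: congest_graph_def)
    have lps: "length ps \<le> card V"
      using distinct_len_card[OF ds _ fin] sp by (simp add: shortest_path_def)
    let ?inp = "path_input V E ps \<zeta>"
    let ?H = "hist alg_send E ?inp"
    fix r v u msg
    assume "r < 1 * \<zeta>" "v \<in> V" "u \<in> nbrs E v" "alg_send (?inp v) (?H r v) u = Some msg"
    then obtain m where m: "m < length ps" "v = ps ! m"
      "msg = m * BB (card V) + enc (cmpv (?inp v) (?H r v) (length (?H r v)))"
      using send_char[OF ds] by blast
    have "enc (cmpv (?inp v) (?H r v) (length (?H r v))) < BB (card V)"
      using enc_dec(1)[OF cmpv_bound[OF cg sp]] .
    then have "msg < (m + 1) * BB (card V)" using m(3) by simp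
    also have "\<dots> \<le> card V * BB (card V)" using m(1) lps by (intro mult_right_mono) auto
    also have "\<dots> \<le> (card V + 1) ^ 3"
    proof -
      have "card V * BB (card V) = 3 * card V * (card V + 1)" by (simp add: BB_def algebra_simps)
      also have "\<dots> \<le> (card V + 1) * (card V + 1) * (card V + 1)"
      proof -
        have "3 * card V \<le> (card V + 1) * (card V + 1)"
        proof -
          have sq: "card V \<le> card V * card V" by (cases "card V") simp_all
          have "(card V + 1) * (card V + 1) = card V * card V + 2 * card V + 1"
            by (simp add: algebra_simps)
          then show ?thesis using sq by linarith
        qed
        then show ?thesis by (intro mult_right_mono) auto
      qed
      also have "\<dots> = (card V + 1) ^ 3" by (simp add: power3_eq_cube)
      finally show ?thesis .
    qed
    finally show "msg < (card V + 1) ^ 3" .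
  next
    fix V E ps and \<zeta> :: nat and i
    assume H: "congest_graph V E idexp \<and> shortest_path V E ps \<and> 1 \<le> \<zeta>"
    then have cg: "congest_graph V E idexp" and sp: "shortest_path V E ps" and z: "1 \<le> \<zeta>" by auto
    have ds: "distinct ps" using sp_distinct[OF sp] .
    let ?inp = "path_input V E ps \<zeta>"
    let ?H = "hist alg_send E ?inp"
    assume i: "i < length ps"
    have "alg_out (?inp (ps ! i)) (?H (1 * \<zeta>) (ps ! i)) = cmpv (?inp (ps ! i)) (?H \<zeta> (ps ! i)) (\<zeta> - 1)"
      unfolding alg_out_def using pi_ps(3)[OF ds i] by simp
    also have "\<dots> = cmpv (?inp (ps ! i)) (?H (\<zeta> - 1) (ps ! i)) (\<zeta> - 1)"
      by (rule cmpv_hist) simp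
    also have "\<dots> = (INF i' \<in> {i - (\<zeta> - 1)..i}. Xge E ps \<zeta> i' (i + (\<zeta> - (\<zeta> - 1))))"
      using invariant[OF cg sp _ i] z by simp
    also have "\<dots> = Xlege E ps \<zeta> i (Suc i)" using Xlege_eq[OF sp i z] z by simp
    finally show "alg_out (?inp (ps ! i)) (?H (1 * \<zeta>) (ps ! i)) = Xlege E ps \<zeta> i (Suc i)" .
  qed
qed


end
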